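(* Let $R$ be an associative ring with identity and involution $*$, and let $a\in R^{\#}\cap R^{\dagger}$. Then $a\in R^{SEP}$ if and only if $a^{\dagger}a(a^{\dagger})^*a^{\dagger}\in PE(R)$.
   Context: An involution on $R$ is a map $x\mapsto x^*$ with $(x^* )^*=x$, $(x+y)^*=x^*+y^*$, $(xy)^*=y^*x^*$. An element $a$ is Moore–Penrose invertible if there is $b$ with $aba=a$, $bab=b$, $(ab)^*=ab$, $(ba)^*=ba$; such $b$ is unique, denoted $a^{\dagger}$, and $R^{\dagger}$ is the set of such $a$. An element $a$ is group invertible if there is $b$ with $aba=a$, $bab=b$, $ab=ba$; such $b$ is unique, denoted $a^{\#}$, and $R^{\#}$ is the set of such $a$. $PE(R)=\{e\in R: e^2=e=e^*\}$ is the set of projections. For $a\in R^{\#}\cap R^{\dagger}$, $a$ is SEP if $a^*=a^{\dagger}=a^{\#}$; $R^{SEP}$ denotes the set of SEP elements. *)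

theory Defs
  imports Main
begin

definition involution :: "('a::ring_1 \<Rightarrow> 'a) \<Rightarrow> bool" where
  "involution s \<longleftrightarrow> (\<forall>x. s (s x) = x) \<and> (\<forall>x y. s (x + y) = s x + s y)
     \<and> (\<forall>x y. s (x * y) = s y * s x)"

definition is_mp_inverse :: "('a::ring_1 \<Rightarrow> 'a) \<Rightarrow> 'a \<Rightarrow> 'a \<Rightarrow> bool" where
  "is_mp_inverse s a b \<longleftrightarrow> a * b * a = a \<and> b * a * b = b \<and> s (a * b) = a * b \<and> s (b * a) = b * a"

definition mp_invertible :: "('a::ring_1 \<Rightarrow> 'a) \<Rightarrow> 'a \<Rightarrow> bool" where
  "mp_invertible s a \<longleftrightarrow> (\<exists>b. is_mp_inverse s a b)"

definition mp_inv :: "('a::ring_1 \<Rightarrow> 'a) \<Rightarrow> 'a \<Rightarrow> 'a" where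
  "mp_inv s a = (THE b. is_mp_inverse s a b)"

definition is_group_inverse :: "'a::ring_1 \<Rightarrow> 'a \<Rightarrow> bool" where
  "is_group_inverse a b \<longleftrightarrow> a * b * a = a \<and> b * a * b = b \<and> a * b = b * a"

definition group_invertible :: "'a::ring_1 \<Rightarrow> bool" where
  "group_invertible a \<longleftrightarrow> (\<exists>b. is_group_inverse a b)"

definition group_inv :: "'a::ring_1 \<Rightarrow> 'a" where
  "group_inv a = (THE b. is_group_inverse a b)"

definition projection :: "('a::ring_1 \<Rightarrow> 'a) \<Rightarrow> 'a \<Rightarrow> bool" where
  "projection s e \<longleftrightarrow> e * e = e \<and> e = s e"

definition SEP :: "('a::ring_1 \<Rightarrow> 'a) \<Rightarrow> 'a \<Rightarrow> bool" where
  "SEP s a \<longleftrightarrow> group_invertible a \<and> mp_invertible s a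
     \<and> s a = mp_inv s a \<and> mp_inv s a = group_inv a"

end

theory Submission
  imports Defs
begin

lemma mp_unique:
  fixes s :: "'a::ring_1 \<Rightarrow> 'a"
  assumes inv: "involution s" and hb: "is_mp_inverse s a b" and hc: "is_mp_inverse s a c"
  shows "b = c"
proof -
  have sm: "\<And>x y. s (x * y) = s y * s x" using inv by (simp add: involution_def)
  have b1: "a*b*a = a" "b*a*b = b" "s (a*b) = a*b" "s (b*a) = b*a" using hb by (auto simp: is_mp_inverse_def)
  have c1: "a*c*a = a" "c*a*c = c" "s (a*c) = a*c" "s (c*a) = c*a" using hc by (auto simp: is_mp_inverse_def)
  have "a*b = (a*c)*(a*b)" by (metis b1(1) mult.assoc c1(1)) 
  also have "\<dots> = s (a*c) * s (a*b)" using b1 c1 by simp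
  also have "\<dots> = s (a*b*(a*c))" using sm by simp
  also have "a*b*(a*c) = a*c" by (metis b1(1) mult.assoc)
  finally have e1: "a*b = a*c" using c1 by simp
  have "b*a = (b*a)*(c*a)" by (metis c1(1) mult.assoc)
  also have "\<dots> = s (b*a) * s (c*a)" using b1 c1 by simp
  also have "\<dots> = s (c*a*(b*a))" using sm by simp
  also have "c*a*(b*a) = c*a" by (metis b1(1) mult.assoc)
  finally have e2: "b*a = c*a" using c1 by simp
  have "b = (b*a)*b" using b1 by (simp add: mult.assoc)
  also have "\<dots> = c*(a*b)" using e2 by (simp add: mult.assoc)
  also have "\<dots> = c" using e1 c1 by (simp add: mult.assoc)
  finally show ?thesis .
qed

lemma mp_inv_eq:
  assumes "involution s" "is_mp_inverse s a b" shows "mp_inv s a = b"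
  unfolding mp_inv_def using assms mp_unique by blast

lemma g_unique:
  fixes a :: "'a::ring_1"
  assumes hb: "is_group_inverse a b" and hc: "is_group_inverse a c"
  shows "b = c"
proof -
  have b1: "a*b*a = a" "b*a*b = b" "a*b = b*a" using hb by (auto simp: is_group_inverse_def)
  have c1: "a*c*a = a" "c*a*c = c" "a*c = c*a" using hc by (auto simp: is_group_inverse_def)
  have aab: "a*(a*b) = a" using b1 by (metis mult.assoc)
  have "a*b = (c*a)*(a*b)" by (metis b1(1) c1(1) c1(3) mult.assoc)
  also have "\<dots> = c*a" using aab by (simp add: mult.assoc)
  finally have e1: "a*b = a*c" using c1 by simp
  have "b = (b*a)*b" using b1 by (simp add: mult.assoc)
  also have "\<dots> = (a*c)*b" using e1 b1 by simp
  also have "\<dots> = c*(a*b)" using c1 by (simp add: mult.assoc)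
  also have "\<dots> = c" using e1 c1 by (simp add: mult.assoc)
  finally show ?thesis .
qed

lemma g_inv_eq:
  assumes "is_group_inverse a b" shows "group_inv a = b"
  unfolding group_inv_def using assms g_unique by blast

theorem theorem2p2:
  fixes s :: "'a::ring_1 \<Rightarrow> 'a" and a :: 'a
  assumes "involution s"
    and "group_invertible a"
    and "mp_invertible s a"
  shows "SEP s a \<longleftrightarrow>
    projection s (mp_inv s a * a * s (mp_inv s a) * mp_inv s a)"
proof -
  have ss: "\<And>x. s (s x) = x" and sm: "\<And>x y. s (x * y) = s y * s x"
    using assms(1) by (auto simp: involution_def)
  obtain b where hb: "is_mp_inverse s a b" using assms(3) mp_invertible_def by blast
  obtain g where hg: "is_group_inverse a g" using assms(2) group_invertible_def by blast
  have mb: "mp_inv s a = b" using mp_inv_eq[OF assms(1) hb] .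
  have gg: "group_inv a = g" using g_inv_eq[OF hg] .
  have b1: "a*b*a = a" "b*a*b = b" "s (a*b) = a*b" "s (b*a) = b*a" using hb by (auto simp: is_mp_inverse_def)
  have g1: "a*g*a = a" "g*a*g = g" "a*g = g*a" using hg by (auto simp: is_group_inverse_def)
  show ?thesis
  proof
    assume "SEP s a"
    then have sa: "s a = b" and bg: "b = g" using mb gg by (auto simp: SEP_def)
    have sb: "s b = a" using sa ss by metis
    have "b * a * s b * b = (g*a)*(a*g)" using sb bg by (simp add: mult.assoc)
    also have "\<dots> = (a*g)*(a*g)" using g1 by simp
    also have "\<dots> = a*g" using g1 by (metis mult.assoc)

    finally have p: "b * a * s b * b = a*b" using bg by simp
    have "a*b*(a*b) = a*b" using b1 by (metis mult.assoc)
    then show "projection s (mp_inv s a * a * s (mp_inv s a) * mp_inv s a)"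
      using p mb b1 by (simp add: projection_def)
  next
    assume pr: "projection s (mp_inv s a * a * s (mp_inv s a) * mp_inv s a)"
    have sab: "s b * s a = a*b" using b1(3) sm by metis
    have sba: "s a * s b = b*a" using b1(4) sm by metis
    define P where "P = b*a"
    define Q where "Q = a*b"
    define H where "H = s b * b"
    have pdef: "b * a * s b * b = P * H" by (simp add: P_def H_def mult.assoc)
    have pstar: "s (P * H) = H * P"
      by (simp add: P_def H_def sm ss sba mult.assoc)
    have pr2: "P*H*(P*H) = P*H" "P*H = H*P"
      using pr mb pdef pstar by (auto simp: projection_def)
    have sbe: "s b = s b * (b*a)"
    proof -
      have "s b = s (b*a*b)" using b1 by simp
      also have "\<dots> = s b * (s a * s b)" by (simp add: sm mult.assoc)
      finally show ?thesis using sba by simp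
    qed
    have sbe2: "s b = (a*b) * s b"
    proof -
      have "s b = s (b*a*b)" using b1 by simp
      also have "\<dots> = (s b * s a) * s b" by (simp add: sm mult.assoc)
      finally show ?thesis using sab by simp
    qed
    have sae: "s a = s a * (a*b)"
    proof -
      have "s a = s (a*b*a)" using b1 by simp
      also have "\<dots> = s a * (s b * s a)" by (simp add: sm mult.assoc)
      finally show ?thesis using sab by simp
    qed
    have sae2: "s a = (b*a) * s a"
    proof -
      have "s a = s (a*b*a)" using b1 by simp
      also have "\<dots> = (s a * s b) * s a" by (simp add: sm mult.assoc)
      finally show ?thesis using sba by simp
    qed
    have QH: "Q*H = H" unfolding Q_def H_def using sbe2 by (metis mult.assoc)
    have HK: "H * (a * s a) = Q"
    proof -
      have "H * (a * s a) = s b * ((b*a) * s a)" by (simp add: H_def mult.assoc)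
      also have "\<dots> = s b * s a" using sae2 by simp
      finally show ?thesis using sab Q_def by simp
    qed
    have PQ: "P*Q = Q*P*Q"
    proof -
      have "P*Q = (P*H)*(a*s a)" using HK by (simp add: mult.assoc)
      also have "\<dots> = Q*(H*P)*(a*s a)" using pr2(2) QH by (metis mult.assoc)
      also have "\<dots> = Q*P*(H*(a*s a))" using pr2(2) by (metis mult.assoc)
      also have "\<dots> = Q*P*Q" using HK by simp
      finally show ?thesis .
    qed
    have sP: "s P = P" and sQ: "s Q = Q" using b1 P_def Q_def by auto
    have QP: "Q*P = Q*P*Q"
    proof -
      have "Q*P = s (P*Q)" using sP sQ sm by metis
      also have "\<dots> = s (Q*P*Q)" using PQ by simp
      also have "\<dots> = Q*P*Q" using sP sQ sm by (metis mult.assoc)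
      finally show ?thesis .
    qed
    have PQc: "P*Q = Q*P" using PQ QP by simp
    have aP: "a*P = a" and Qa: "Q*a = a" using b1 P_def Q_def by (auto simp: mult.assoc)
    have QQ: "Q*Q = Q" and PP: "P*P = P" using b1 P_def Q_def by (metis mult.assoc)+
    define x where "x = Q - P*Q"
    have ax: "a*x = 0" unfolding x_def using aP by (simp add: algebra_simps mult.assoc[symmetric])
    have Qx: "Q*x = x" unfolding x_def using QQ PQc by (simp add: algebra_simps mult.assoc[symmetric])
    have Qag: "Q = a*g*Q" unfolding Q_def using g1 by (metis mult.assoc)
    have "x = a*g*x" using Qx Qag by (metis mult.assoc)
    also have "\<dots> = g*(a*x)" using g1 by (simp add: mult.assoc)
    finally have "x = 0" using ax by simp
    hence e1: "Q = P*Q" unfolding x_def by simp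
    define y where "y = P - P*Q"
    have ya: "y*a = 0" unfolding y_def using Qa by (simp add: algebra_simps mult.assoc)
    have yP: "y*P = y" unfolding y_def using PP PQc by (simp add: algebra_simps mult.assoc)
    have Pga: "P = P*g*a" unfolding P_def using g1 by (metis mult.assoc)
    have "y = y*g*a" using yP Pga by (metis mult.assoc)
    also have "\<dots> = (y*a)*g" using g1 by (simp add: mult.assoc)
    finally have "y = 0" using ya by simp
    hence e2: "P = P*Q" unfolding y_def by simp
    have PeQ: "P = Q" using e1 e2 by simp
    have HP: "P*H = H" using PeQ QH by simp
    have HH: "H*H = H" using pr2 HP by simp
    have HQ: "H = Q"
    proof -
      have "Q = H*H*(a*s a)" using HK HH by simp
      also have "\<dots> = H*Q" using HK by (simp add: mult.assoc)
      finally have "Q = H*Q" .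
      hence "s Q = s Q * s H" using sm by metis
      moreover have "s H = H" unfolding H_def using sm ss by metis
      ultimately show ?thesis using sQ QH by simp
    qed
    have aH: "s a * H = b"
    proof -
      have "s a * H = (s a * s b) * b" by (simp add: H_def mult.assoc)
      also have "\<dots> = b" using sba b1 by simp
      finally show ?thesis .
    qed
    have sab2: "s a = b" using aH HQ sae Q_def by simp
    have agab: "a*g = a*b"
    proof -
      have "a*g*(a*b) = a*b" using g1 by (metis mult.assoc)
      moreover have "a*g*(a*b) = g*a*(b*a)" using g1 PeQ P_def Q_def by simp
      moreover have "g*a*(b*a) = g*a" using b1 by (metis mult.assoc)
      ultimately show ?thesis using g1 by simp
    qed
    have bg: "b = g"
    proof -
      have "b = b*(a*b)" using b1 by (simp add: mult.assoc)
      also have "\<dots> = (b*a)*g" using agab by (simp add: mult.assoc)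
      also have "\<dots> = (a*g)*g" using agab PeQ P_def Q_def by simp
      also have "\<dots> = g" using g1 by (simp add: mult.assoc)
      finally show ?thesis .
    qed
    show "SEP s a" unfolding SEP_def using assms(2,3) mb gg sab2 bg by simp
  qed
qed

end
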